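(* Let $\mathbb{E}$ be a finite-dimensional real inner product space and let $f_i:\mathbb{E}\to(-\infty,\infty]$, $i=1,\ldots,M$, be convex, directionally differentiable, continuous on their domains, with $\mathrm{dom} f_i$ closed, and suppose $F(x):=\min_{i\in[M]}f_i(x)$ is continuous on $\mathrm{dom} F$. If $x^*\in\mathrm{dom} F$ is a d-stationary point of the problem $\min_{x\in\mathbb{E}}F(x)$, then $x^*$ is a local minimizer of $F$.
   Context: $\mathrm{dom}\, g=\{x\mid g(x)<\infty\}$. Feasible cone: $\mathcal{F}(x;\mathcal{C})=\{d\mid \exists\varsigma'>0:\ x+\varsigma d\in\mathcal{C}\ \forall\varsigma\in(0,\varsigma')\}$ if $x\in\mathcal{C}$, else $\emptyset$. Directional differentiability: $g'(x;d)=\lim_{\varsigma\searrow0}(g(x+\varsigma d)-g(x))/\varsigma$ exists in $\mathbb{R}$ for all $x\in\mathrm{dom}\, g$, $d\in\mathcal{F}(x;\mathrm{dom}\, g)$. A point $x^*\in\mathrm{dom} F$ is a d-stationary point of $\min F$ if $F'(x^*;d)\ge0$ for all $d\in\mathcal{F}(x^*;\mathrm{dom} F)$. *)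

theory Defs
  imports "HOL-Analysis.Analysis"
begin

definition edom :: "('a \<Rightarrow> ereal) \<Rightarrow> 'a set" where
  "edom g = {x. g x < \<infinity>}"

definition feasible_cone :: "'a::real_vector \<Rightarrow> 'a set \<Rightarrow> 'a set" where
  "feasible_cone x C = (if x \<in> C then
      {d. \<exists>s'>0. \<forall>s. 0 < s \<and> s < s' \<longrightarrow> x + s *\<^sub>R d \<in> C} else {})"

definition ext_convex :: "('a::real_vector \<Rightarrow> ereal) \<Rightarrow> bool" where
  "ext_convex g = (\<forall>x y t. 0 \<le> t \<and> t \<le> 1 \<longrightarrow>
      g ((1 - t) *\<^sub>R x + t *\<^sub>R y) \<le> ereal (1 - t) * g x + ereal t * g y)"

definition has_dir_deriv :: "('a::real_vector \<Rightarrow> ereal) \<Rightarrow> 'a \<Rightarrow> 'a \<Rightarrow> real \<Rightarrow> bool" where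
  "has_dir_deriv g x d L =
     (((\<lambda>s. (real_of_ereal (g (x + s *\<^sub>R d)) - real_of_ereal (g x)) / s) \<longlongrightarrow> L) (at_right 0))"

definition dir_differentiable :: "('a::real_vector \<Rightarrow> ereal) \<Rightarrow> bool" where
  "dir_differentiable g = (\<forall>x \<in> edom g. \<forall>d \<in> feasible_cone x (edom g). \<exists>L. has_dir_deriv g x d L)"

definition d_stationary :: "('a::real_vector \<Rightarrow> ereal) \<Rightarrow> 'a \<Rightarrow> bool" where
  "d_stationary F x = (x \<in> edom F \<and>
     (\<forall>d \<in> feasible_cone x (edom F). \<exists>L. has_dir_deriv F x d L \<and> L \<ge> 0))"

definition local_minimizer :: "('a::metric_space \<Rightarrow> ereal) \<Rightarrow> 'a \<Rightarrow> bool" where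
  "local_minimizer F x = (\<exists>e>0. \<forall>y. dist y x < e \<longrightarrow> F x \<le> F y)"

end

theory Submission
  imports Defs
begin

theorem mainTheorem3:
  fixes f :: "nat \<Rightarrow> 'a::euclidean_space \<Rightarrow> ereal"
    and M :: nat and F :: "'a \<Rightarrow> ereal" and xs :: 'a
  assumes M_pos: "0 < M"
    and no_minf: "\<And>i x. i < M \<Longrightarrow> f i x \<noteq> -\<infinity>"
    and conv: "\<And>i. i < M \<Longrightarrow> ext_convex (f i)"
    and dirdiff: "\<And>i. i < M \<Longrightarrow> dir_differentiable (f i)"
    and cont: "\<And>i. i < M \<Longrightarrow> continuous_on (edom (f i)) (f i)"
    and closed_dom: "\<And>i. i < M \<Longrightarrow> closed (edom (f i))"
    and F_def: "F = (\<lambda>x. Min ((\<lambda>i. f i x) ` {..<M}))"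
    and F_cont: "continuous_on (edom F) F"
    and stat: "d_stationary F xs"
  shows "local_minimizer F xs"
proof -
  have ne: "(\<lambda>i. f i x) ` {..<M} \<noteq> {}" for x using M_pos by auto
  have Fle: "F x \<le> f i x" if "i < M" for i x
    unfolding F_def using that by (intro Min_le) auto
  have Fge: "c \<le> F x \<longleftrightarrow> (\<forall>i<M. c \<le> f i x)" for c x
    unfolding F_def using ne[of x] by (subst Min_ge_iff) auto
  have Fnm: "F x \<noteq> -\<infinity>" for x
  proof -
    have "F x \<in> (\<lambda>i. f i x) ` {..<M}" unfolding F_def using ne[of x] by (intro Min_in) auto
    then show ?thesis using no_minf by (metis imageE lessThan_iff)
  qed
  have xdom: "xs \<in> edom F" using stat unfolding d_stationary_def by auto
  then have Fxfin: "F xs = ereal (real_of_ereal (F xs))"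
    using Fnm[of xs] unfolding edom_def by (cases "F xs") auto
  define a where "a = real_of_ereal (F xs)"
  have each: "\<exists>e>0. \<forall>y. dist y xs < e \<longrightarrow> F xs \<le> f i y" if i: "i < M" for i
  proof (cases "f i xs = F xs")
    case True
    have "F xs \<le> f i y" for y
    proof (cases "f i y = \<infinity>")
      case True then show ?thesis by simp
    next
      case False
      define b where "b = real_of_ereal (f i y)"
      have fy: "f i y = ereal b" using False no_minf[OF i, of y] unfolding b_def by (cases "f i y") auto
      have fx: "f i xs = ereal a" using True Fxfin a_def by simp
      define d where "d = y - xs"
      have pt: "xs + s *\<^sub>R d = (1 - s) *\<^sub>R xs + s *\<^sub>R y" for s
        unfolding d_def by (simp add: algebra_simps)
      have cvx: "f i (xs + s *\<^sub>R d) \<le> ereal ((1 - s) * a + s * b)" if "0 < s" "s < 1" for s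
      proof -
        have "f i (xs + s *\<^sub>R d) \<le> ereal (1 - s) * f i xs + ereal s * f i y"
          unfolding pt using conv[OF i] that unfolding ext_convex_def by auto
        then show ?thesis using fx fy by simp
      qed
      have "d \<in> feasible_cone xs (edom F)"
        unfolding feasible_cone_def using xdom
      proof (simp, intro exI[of _ 1] conjI allI impI, simp)
        fix s :: real assume s: "0 < s \<and> s < 1"
        have "F (xs + s *\<^sub>R d) \<le> f i (xs + s *\<^sub>R d)" using Fle[OF i] .
        also have "\<dots> \<le> ereal ((1 - s) * a + s * b)" using cvx s by auto
        finally show "xs + s *\<^sub>R d \<in> edom F" unfolding edom_def
          using le_less_trans by fastforce
      qed
      then obtain L where L: "has_dir_deriv F xs d L" "L \<ge> 0"
        using stat unfolding d_stationary_def by auto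
      have ev: "eventually (\<lambda>s. (real_of_ereal (F (xs + s *\<^sub>R d)) - real_of_ereal (F xs)) / s \<le> b - a) (at_right 0)"
        unfolding eventually_at_right_field
      proof (intro exI[of _ 1] conjI allI impI, simp)
        fix s :: real assume s0: "0 < s" and s1: "s < 1"
        then have s: "0 < s \<and> s < 1" by simp
        have le: "F (xs + s *\<^sub>R d) \<le> ereal ((1 - s) * a + s * b)"
          using Fle[OF i] cvx s order_trans by blast
        have "real_of_ereal (F (xs + s *\<^sub>R d)) \<le> (1 - s) * a + s * b"
          using le Fnm[of "xs + s *\<^sub>R d"]
          by (cases "F (xs + s *\<^sub>R d)") auto
        then have "real_of_ereal (F (xs + s *\<^sub>R d)) - a \<le> s * (b - a)"
          by (simp add: algebra_simps)
        then show "(real_of_ereal (F (xs + s *\<^sub>R d)) - real_of_ereal (F xs)) / s \<le> b - a"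
          using s unfolding a_def by (simp add: divide_le_eq mult.commute)
      qed
      have "L \<le> b - a"
        using L(1) ev unfolding has_dir_deriv_def
        by (intro tendsto_upperbound) auto
      then have "a \<le> b" using L(2) by simp
      then show ?thesis using fy Fxfin a_def by (metis ereal_less_eq(3))
    qed
    then show ?thesis by (intro exI[of _ 1]) auto
  next
    case False
    then have gt: "F xs < f i xs" using Fle[OF i, of xs] by simp
    show ?thesis
    proof (cases "xs \<in> edom (f i)")
      case True
      have "(f i \<longlongrightarrow> f i xs) (at xs within edom (f i))"
        using cont[OF i] True by (simp add: continuous_on_def)
      then have "eventually (\<lambda>z. F xs < f i z) (at xs within edom (f i))"
        using gt by (rule order_tendstoD)
      then obtain e where e: "e > 0"
        "\<And>z. z \<in> edom (f i) \<Longrightarrow> z \<noteq> xs \<Longrightarrow> dist z xs < e \<Longrightarrow> F xs < f i z"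
        unfolding eventually_at by auto
      show ?thesis
      proof (intro exI[of _ e] conjI allI impI)
        fix y assume "dist y xs < e"
        then show "F xs \<le> f i y" using e gt
          by (cases "y \<in> edom (f i)"; cases "y = xs") (auto simp: edom_def intro: less_imp_le)
      qed (fact e)
    next
      case False
      have "open (- edom (f i))" using closed_dom[OF i] by auto
      then obtain e where e: "e > 0" "ball xs e \<subseteq> - edom (f i)"
        using False by (meson ComplI open_contains_ball)
      show ?thesis
      proof (intro exI[of _ e] conjI allI impI)
        fix y assume "dist y xs < e"
        then have "y \<notin> edom (f i)" using e by (auto simp: dist_commute)
        then show "F xs \<le> f i y" by (simp add: edom_def)
      qed (fact e)
    qed
  qed
  then obtain E where E: "\<And>i. i < M \<Longrightarrow> E i > 0 \<and> (\<forall>y. dist y xs < E i \<longrightarrow> F xs \<le> f i y)"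
    by metis
  define e where "e = Min (E ` {..<M})"
  have epos: "e > 0" unfolding e_def using M_pos E by (subst Min_gr_iff) auto
  have ele: "e \<le> E i" if "i < M" for i unfolding e_def using that by (intro Min_le) auto
  show ?thesis unfolding local_minimizer_def
  proof (intro exI[of _ e] conjI allI impI)
    fix y assume "dist y xs < e"
    then show "F xs \<le> F y" using E ele by (subst Fge) (meson less_le_trans)
  qed (fact epos)
qed

end
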